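(* Suppose (A1) there are constants $G,M>0$ with $\|\nabla_\theta\log\pi_\theta(a|s)\|_2\le G$ and $\|\nabla^2_\theta\log\pi_\theta(a|s)\|_2\le M$ for all $a\in\mathcal{A}$, $s\in\mathcal{S}$, $\theta\in\mathbb{R}^d$; and (A3) there is $W<\infty$ such that $\mathrm{Var}_{\tau\sim p(\cdot|\theta_2)}(\omega(\tau|\theta_1,\theta_2))\le W$ for all $\theta_1,\theta_2\in\mathbb{R}^d$. Let $\tilde\theta^s$ be the reference point of an epoch of SVRPG and $\theta_t^{s+1}$ an inner iterate (more generally, any $\tilde\theta^s,\theta_t^{s+1}\in\mathbb{R}^d$). Then, with $\tau\sim p(\cdot|\theta_t^{s+1})$, $$\mathrm{Var}\big(\omega(\tau|\tilde\theta^s,\theta_t^{s+1})\big)\le C_\omega\|\tilde\theta^s-\theta_t^{s+1}\|_2^2,\qquad C_\omega=H(2HG^2+M)(W+1).$$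
   Context: MDP setting: state space $\mathcal{S}$, action space $\mathcal{A}$, transition probabilities $P(s'|s,a)$, initial state distribution $\rho$, horizon $H$. A policy $\pi_\theta(a|s)$ is parameterized by $\theta\in\mathbb{R}^d$. A trajectory is $\tau=(s_0,a_0,\dots,s_{H-1},a_{H-1},s_H)$ with density $p(\tau|\theta)=\rho(s_0)\prod_{h=0}^{H-1}\pi_\theta(a_h|s_h)P(s_{h+1}|s_h,a_h)$. The importance weight is $\omega(\tau|\theta_1,\theta_2)=p(\tau|\theta_1)/p(\tau|\theta_2)$, and its variance is taken over $\tau\sim p(\cdot|\theta_2)$. In SVRPG, each epoch fixes a reference parameter $\tilde\theta^s$ and produces inner iterates $\theta_t^{s+1}$ by stochastic gradient ascent steps. *)

theory Defs
  imports "HOL-Analysis.Analysis"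
begin

text \<open>Trajectories tau = (s_0,a_0,...,s_{H-1},a_{H-1},s_H) are represented as pairs (ss, as)
  with ss a state sequence indexed by {..H} and as an action sequence indexed by {..<H}.
  The base measure on trajectories is the product of the base measures mS on states and
  mA on actions; densities rho, pol, P are taken w.r.t. mS resp. mA.
  pol th a s stands for pi_theta(a|s), P s' s a for P(s'|s,a).\<close>

definition traj_base :: "'s measure \<Rightarrow> 'a measure \<Rightarrow> nat \<Rightarrow> ((nat \<Rightarrow> 's) \<times> (nat \<Rightarrow> 'a)) measure" where
  "traj_base mS mA H = (PiM {..H} (\<lambda>_. mS)) \<Otimes>\<^sub>M (PiM {..<H} (\<lambda>_. mA))"

definition traj_dens ::
  "('s \<Rightarrow> real) \<Rightarrow> ('th \<Rightarrow> 'a \<Rightarrow> 's \<Rightarrow> real) \<Rightarrow> ('s \<Rightarrow> 's \<Rightarrow> 'a \<Rightarrow> real) \<Rightarrow> nat \<Rightarrow> 'th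
    \<Rightarrow> (nat \<Rightarrow> 's) \<times> (nat \<Rightarrow> 'a) \<Rightarrow> real" where
  "traj_dens rho pol P H th = (\<lambda>(ss, as). rho (ss 0) *
      (\<Prod>h<H. pol th (as h) (ss h) * P (ss (Suc h)) (ss h) (as h)))"

definition traj_dist ::
  "'s measure \<Rightarrow> 'a measure \<Rightarrow> ('s \<Rightarrow> real) \<Rightarrow> ('th \<Rightarrow> 'a \<Rightarrow> 's \<Rightarrow> real) \<Rightarrow> ('s \<Rightarrow> 's \<Rightarrow> 'a \<Rightarrow> real)
    \<Rightarrow> nat \<Rightarrow> 'th \<Rightarrow> ((nat \<Rightarrow> 's) \<times> (nat \<Rightarrow> 'a)) measure" where
  "traj_dist mS mA rho pol P H th =
     density (traj_base mS mA H) (\<lambda>\<tau>. ennreal (traj_dens rho pol P H th \<tau>))"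

definition imp_weight ::
  "('s \<Rightarrow> real) \<Rightarrow> ('th \<Rightarrow> 'a \<Rightarrow> 's \<Rightarrow> real) \<Rightarrow> ('s \<Rightarrow> 's \<Rightarrow> 'a \<Rightarrow> real) \<Rightarrow> nat \<Rightarrow> 'th \<Rightarrow> 'th
    \<Rightarrow> (nat \<Rightarrow> 's) \<times> (nat \<Rightarrow> 'a) \<Rightarrow> real" where
  "imp_weight rho pol P H th1 th2 \<tau> = traj_dens rho pol P H th1 \<tau> / traj_dens rho pol P H th2 \<tau>"

definition var_of :: "'b measure \<Rightarrow> ('b \<Rightarrow> real) \<Rightarrow> real" where
  "var_of D X = (\<integral>x. (X x - (\<integral>y. X y \<partial>D))\<^sup>2 \<partial>D)"

end

theory Submission
  imports Defs "HOL-Probability.Probability"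
begin


lemma ln_diff_bound:
  fixes f :: "real^'d \<Rightarrow> real"
  assumes d: "\<And>th. GDERIV f th :> g th" and b: "\<And>th. norm (g th) \<le> G"
  shows "\<bar>f x - f y\<bar> \<le> G * norm (x - y)"
proof -
  have "norm (f x - f y) \<le> G * norm (x - y)"
  proof (rule differentiable_bound[where S=UNIV and f'="\<lambda>th h. h \<bullet> g th"])
    fix th :: "real^'d"
    show "(f has_derivative (\<lambda>h. h \<bullet> g th)) (at th within UNIV)"
      using d[of th] by (simp add: gderiv_def)
    show "onorm (\<lambda>h. h \<bullet> g th) \<le> G"
    proof (rule onorm_bound)
      show "0 \<le> G" using b[of th] norm_ge_zero order_trans by blast
      fix h :: "real^'d"
      have "norm (h \<bullet> g th) \<le> norm h * norm (g th)" by (simp add: Cauchy_Schwarz_ineq2)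
      also have "\<dots> \<le> norm h * G" by (simp add: b mult_left_mono)
      finally show "norm (h \<bullet> g th) \<le> G * norm h" by (simp add: mult.commute)
    qed
  qed auto
  then show ?thesis by simp
qed

lemma exp_sq_bound:
  fixes X :: real
  shows "(exp X - 1)\<^sup>2 \<le> X\<^sup>2 * ((exp X)\<^sup>2 + 1)"
proof (cases "X \<ge> 0")
  case True
  have "1 - X \<le> exp (-X)" using exp_ge_add_one_self[of "-X"] by simp
  hence "exp X * (1 - X) \<le> exp X * exp (-X)" by (simp add: mult_left_mono)
  hence a: "exp X - 1 \<le> X * exp X" by (simp add: exp_minus field_simps)
  have "0 \<le> exp X - 1" using True by simp
  hence "(exp X - 1)\<^sup>2 \<le> (X * exp X)\<^sup>2" using a power_mono by blast
  also have "\<dots> \<le> X\<^sup>2 * ((exp X)\<^sup>2 + 1)" by (simp add: power_mult_distrib mult_left_mono)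
  finally show ?thesis .
next
  case False
  have a: "1 - exp X \<le> -X" using exp_ge_add_one_self[of X] by linarith
  have "0 \<le> 1 - exp X" using False by simp
  hence "(1 - exp X)\<^sup>2 \<le> (-X)\<^sup>2" using a power_mono by blast
  hence "(exp X - 1)\<^sup>2 \<le> X\<^sup>2" by (simp add: power2_commute)
  also have "\<dots> \<le> X\<^sup>2 * ((exp X)\<^sup>2 + 1)"
    using mult_left_mono[of 1 "(exp X)\<^sup>2 + 1" "X\<^sup>2"] by simp
  finally show ?thesis .
qed




lemma traj_dens_meas:
  fixes mS :: "'s measure" and mA :: "'a measure"
    and rho :: "'s \<Rightarrow> real" and pol :: "'th \<Rightarrow> 'a \<Rightarrow> 's \<Rightarrow> real" and P :: "'s \<Rightarrow> 's \<Rightarrow> 'a \<Rightarrow> real"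
  assumes rho_meas: "rho \<in> borel_measurable mS"
    and q_meas: "(\<lambda>(a, s). pol th a s) \<in> borel_measurable (mA \<Otimes>\<^sub>M mS)"
    and P_meas: "(\<lambda>(s', s, a). P s' s a) \<in> borel_measurable (mS \<Otimes>\<^sub>M (mS \<Otimes>\<^sub>M mA))"
  shows "traj_dens rho pol P H th \<in> borel_measurable (traj_base mS mA H)"
proof -
  have q_comp[measurable (raw)]: "(\<lambda>x. pol th (fa x) (fs x)) \<in> borel_measurable N"
    if "fa \<in> measurable N mA" "fs \<in> measurable N mS" for N :: "'z measure" and fa fs
    using measurable_compose[OF measurable_Pair[OF that] q_meas] by simp
  have P_comp[measurable (raw)]: "(\<lambda>x. P (f1 x) (fs x) (fa x)) \<in> borel_measurable N"
    if "f1 \<in> measurable N mS" "fs \<in> measurable N mS" "fa \<in> measurable N mA"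
    for N :: "'z measure" and f1 fa fs
    using measurable_compose[OF measurable_Pair[OF that(1) measurable_Pair[OF that(2,3)]] P_meas]
    by simp
  note rho_meas[measurable]
  show ?thesis unfolding traj_dens_def traj_base_def by measurable
qed

lemma traj_mass:
  fixes mS :: "'s measure" and mA :: "'a measure"
    and rho :: "'s \<Rightarrow> real" and q :: "'a \<Rightarrow> 's \<Rightarrow> real" and P :: "'s \<Rightarrow> 's \<Rightarrow> 'a \<Rightarrow> real"
  assumes sfS: "sigma_finite_measure mS" and sfA: "sigma_finite_measure mA"
    and rho_meas: "rho \<in> borel_measurable mS"
    and rho_nonneg: "\<And>s. s \<in> space mS \<Longrightarrow> rho s \<ge> 0"
    and rho_prob: "(\<integral>\<^sup>+ s. ennreal (rho s) \<partial>mS) = 1"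
    and q_meas: "(\<lambda>(a, s). q a s) \<in> borel_measurable (mA \<Otimes>\<^sub>M mS)"
    and q_nonneg: "\<And>a s. q a s \<ge> 0"
    and q_prob: "\<And>s. s \<in> space mS \<Longrightarrow> (\<integral>\<^sup>+ a. ennreal (q a s) \<partial>mA) = 1"
    and P_meas: "(\<lambda>(s', s, a). P s' s a) \<in> borel_measurable (mS \<Otimes>\<^sub>M (mS \<Otimes>\<^sub>M mA))"
    and P_nonneg: "\<And>s' s a. s' \<in> space mS \<Longrightarrow> s \<in> space mS \<Longrightarrow> a \<in> space mA \<Longrightarrow> P s' s a \<ge> 0"
    and P_prob: "\<And>s a. s \<in> space mS \<Longrightarrow> a \<in> space mA \<Longrightarrow> (\<integral>\<^sup>+ s'. ennreal (P s' s a) \<partial>mS) = 1"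
  shows "(\<integral>\<^sup>+ \<tau>. ennreal (traj_dens rho (\<lambda>_. q) P H () \<tau>) \<partial>traj_base mS mA H) = 1"
proof -
  interpret SA: sigma_finite_measure mA by (rule sfA)
  interpret SS: sigma_finite_measure mS by (rule sfS)
  interpret PS: product_sigma_finite "\<lambda>_::nat. mS" by (simp add: product_sigma_finite_def sfS)
  interpret PA: product_sigma_finite "\<lambda>_::nat. mA" by (simp add: product_sigma_finite_def sfA)
  have q_comp[measurable (raw)]: "(\<lambda>x. q (fa x) (fs x)) \<in> borel_measurable N"
    if "fa \<in> measurable N mA" "fs \<in> measurable N mS" for N :: "'z measure" and fa fs
    using measurable_compose[OF measurable_Pair[OF that] q_meas] by simp
  have P_comp[measurable (raw)]: "(\<lambda>x. P (f1 x) (fs x) (fa x)) \<in> borel_measurable N"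
    if "f1 \<in> measurable N mS" "fs \<in> measurable N mS" "fa \<in> measurable N mA"
    for N :: "'z measure" and f1 fa fs
    using measurable_compose[OF measurable_Pair[OF that(1) measurable_Pair[OF that(2,3)]] P_meas]
    by simp
  note rho_meas[measurable]
  define g where "g s s' = (\<integral>\<^sup>+ a. ennreal (q a s * P s' s a) \<partial>mA)" for s s'
  have g_meas[measurable]: "(\<lambda>(s, s'). g s s') \<in> borel_measurable (mS \<Otimes>\<^sub>M mS)"
    unfolding g_def by measurable
  have g_one: "(\<integral>\<^sup>+ s'. g s s' \<partial>mS) = 1" if s: "s \<in> space mS" for s
  proof -
    interpret PAS: pair_sigma_finite mA mS by unfold_locales
    have "(\<integral>\<^sup>+ s'. g s s' \<partial>mS) = (\<integral>\<^sup>+ a. (\<integral>\<^sup>+ s'. ennreal (q a s * P s' s a) \<partial>mS) \<partial>mA)"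
      unfolding g_def
      by (rule PAS.Fubini', measurable, rule s, rule P_comp, auto intro: measurable_const s)
    also have "\<dots> = (\<integral>\<^sup>+ a. ennreal (q a s) \<partial>mA)"
    proof (rule nn_integral_cong)
      fix a assume a: "a \<in> space mA"
      have "(\<integral>\<^sup>+ s'. ennreal (q a s * P s' s a) \<partial>mS) = (\<integral>\<^sup>+ s'. ennreal (q a s) * ennreal (P s' s a) \<partial>mS)"
        by (simp add: ennreal_mult' q_nonneg)
      also have "\<dots> = ennreal (q a s) * (\<integral>\<^sup>+ s'. ennreal (P s' s a) \<partial>mS)"
        proof (rule nn_integral_cmult)
        have [measurable]: "(\<lambda>s'. P s' s a) \<in> borel_measurable mS"
          by (rule P_comp) (auto intro: measurable_const s a)
        show "(\<lambda>s'. ennreal (P s' s a)) \<in> borel_measurable mS" by measurable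
      qed
      also have "\<dots> = ennreal (q a s)" using P_prob[OF s a] by simp
      finally show "(\<integral>\<^sup>+ s'. ennreal (q a s * P s' s a) \<partial>mS) = ennreal (q a s)" .
    qed
    also have "\<dots> = 1" by (rule q_prob[OF s])
    finally show ?thesis .
  qed
  have chain: "(\<integral>\<^sup>+ ss. ennreal (rho (ss 0)) * (\<Prod>h<n. g (ss h) (ss (Suc h))) \<partial>PiM {..n} (\<lambda>_. mS)) = 1" for n
  proof (induction n)
    case 0
    have "(\<integral>\<^sup>+ ss. ennreal (rho (ss 0)) * (\<Prod>h<0. g (ss h) (ss (Suc h))) \<partial>PiM {..0} (\<lambda>_. mS))
        = (\<integral>\<^sup>+ ss. ennreal (rho (ss 0)) \<partial>PiM {0::nat} (\<lambda>_. mS))" by simp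
    also have "\<dots> = 1" using PS.product_nn_integral_singleton[of "\<lambda>s. ennreal (rho s)" 0] rho_prob
      by simp
    finally show ?case .
  next
    case (Suc n)
    have meas: "(\<lambda>ss. ennreal (rho (ss 0)) * (\<Prod>h<Suc n. g (ss h) (ss (Suc h)))) \<in> borel_measurable (PiM (insert (Suc n) {..n}) (\<lambda>_. mS))"
      by measurable auto
    have "{..Suc n} = insert (Suc n) {..n}" by auto
    hence "(\<integral>\<^sup>+ ss. ennreal (rho (ss 0)) * (\<Prod>h<Suc n. g (ss h) (ss (Suc h))) \<partial>PiM {..Suc n} (\<lambda>_. mS))
      = (\<integral>\<^sup>+ x. (\<integral>\<^sup>+ y. ennreal (rho ((x(Suc n := y)) 0)) * (\<Prod>h<Suc n. g ((x(Suc n := y)) h) ((x(Suc n := y)) (Suc h))) \<partial>mS) \<partial>PiM {..n} (\<lambda>_. mS))"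
      using PS.product_nn_integral_insert[OF _ _ meas] by simp
    also have "\<dots> = (\<integral>\<^sup>+ x. ennreal (rho (x 0)) * (\<Prod>h<n. g (x h) (x (Suc h))) \<partial>PiM {..n} (\<lambda>_. mS))"
    proof (rule nn_integral_cong)
      fix x assume x: "x \<in> space (PiM {..n} (\<lambda>_. mS))"
      hence xn: "x n \<in> space mS" by (auto simp: space_PiM PiE_def Pi_def)
      have "(\<integral>\<^sup>+ y. ennreal (rho ((x(Suc n := y)) 0)) * (\<Prod>h<Suc n. g ((x(Suc n := y)) h) ((x(Suc n := y)) (Suc h))) \<partial>mS)
          = (\<integral>\<^sup>+ y. (ennreal (rho (x 0)) * (\<Prod>h<n. g (x h) (x (Suc h)))) * g (x n) y \<partial>mS)"
        by (rule nn_integral_cong) (simp add: mult.assoc)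
      also have "\<dots> = (ennreal (rho (x 0)) * (\<Prod>h<n. g (x h) (x (Suc h)))) * (\<integral>\<^sup>+ y. g (x n) y \<partial>mS)"
        by (rule nn_integral_cmult) (measurable, auto simp: xn)
      also have "\<dots> = ennreal (rho (x 0)) * (\<Prod>h<n. g (x h) (x (Suc h)))" using g_one[OF xn] by simp
      finally show "(\<integral>\<^sup>+ y. ennreal (rho ((x(Suc n := y)) 0)) * (\<Prod>h<Suc n. g ((x(Suc n := y)) h) ((x(Suc n := y)) (Suc h))) \<partial>mS)
          = ennreal (rho (x 0)) * (\<Prod>h<n. g (x h) (x (Suc h)))" .
    qed
    also have "\<dots> = 1" by (rule Suc.IH)
    finally show ?case .
  qed
  interpret SPA: sigma_finite_measure "PiM {..<H} (\<lambda>_. mA)" by (rule PA.sigma_finite) simp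
  have dens_meas: "(\<lambda>\<tau>. ennreal (traj_dens rho (\<lambda>_. q) P H () \<tau>)) \<in> borel_measurable (PiM {..H} (\<lambda>_. mS) \<Otimes>\<^sub>M PiM {..<H} (\<lambda>_. mA))"
    unfolding traj_dens_def by measurable
  have "(\<integral>\<^sup>+ \<tau>. ennreal (traj_dens rho (\<lambda>_. q) P H () \<tau>) \<partial>traj_base mS mA H)
      = (\<integral>\<^sup>+ ss. (\<integral>\<^sup>+ as. ennreal (traj_dens rho (\<lambda>_. q) P H () (ss, as)) \<partial>PiM {..<H} (\<lambda>_. mA)) \<partial>PiM {..H} (\<lambda>_. mS))"
    unfolding traj_base_def by (rule SPA.nn_integral_fst[OF dens_meas, symmetric])
  also have "\<dots> = (\<integral>\<^sup>+ ss. ennreal (rho (ss 0)) * (\<Prod>h<H. g (ss h) (ss (Suc h))) \<partial>PiM {..H} (\<lambda>_. mS))"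
  proof (rule nn_integral_cong)
    fix ss assume ss: "ss \<in> space (PiM {..H} (\<lambda>_. mS))"
    hence ssh: "ss h \<in> space mS" if "h \<le> H" for h using that by (auto simp: space_PiM PiE_def Pi_def)
    have "(\<integral>\<^sup>+ as. ennreal (traj_dens rho (\<lambda>_. q) P H () (ss, as)) \<partial>PiM {..<H} (\<lambda>_. mA))
       = (\<integral>\<^sup>+ as. ennreal (rho (ss 0)) * (\<Prod>h\<in>{..<H}. (\<lambda>h a. ennreal (q a (ss h) * P (ss (Suc h)) (ss h) a)) h (as h)) \<partial>PiM {..<H} (\<lambda>_. mA))"
    proof (rule nn_integral_cong)
      fix as assume as: "as \<in> space (PiM {..<H} (\<lambda>_. mA))"
      hence ash: "as h \<in> space mA" if "h < H" for h using that by (auto simp: space_PiM PiE_def Pi_def)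
      have nn: "0 \<le> q (as h) (ss h) * P (ss (Suc h)) (ss h) (as h)" if "h \<in> {..<H}" for h
        using that ssh ash q_nonneg P_nonneg by (simp add: mult_nonneg_nonneg)
      have pe: "(\<Prod>h<H. ennreal (q (as h) (ss h) * P (ss (Suc h)) (ss h) (as h))) = ennreal (\<Prod>h<H. q (as h) (ss h) * P (ss (Suc h)) (ss h) (as h))"
        by (rule prod_ennreal) (rule nn)
      show "ennreal (traj_dens rho (\<lambda>_. q) P H () (ss, as)) = ennreal (rho (ss 0)) * (\<Prod>h\<in>{..<H}. (\<lambda>h a. ennreal (q a (ss h) * P (ss (Suc h)) (ss h) a)) h (as h))"
        unfolding traj_dens_def using rho_nonneg[OF ssh[of 0]]
        by (simp add: ennreal_mult' pe)
    qed
    also have "\<dots> = ennreal (rho (ss 0)) * (\<integral>\<^sup>+ as. (\<Prod>h\<in>{..<H}. (\<lambda>h a. ennreal (q a (ss h) * P (ss (Suc h)) (ss h) a)) h (as h)) \<partial>PiM {..<H} (\<lambda>_. mA))"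
      by (rule nn_integral_cmult) (measurable, auto simp: ssh)
    also have "\<dots> = ennreal (rho (ss 0)) * (\<Prod>h\<in>{..<H}. (\<integral>\<^sup>+ a. ennreal (q a (ss h) * P (ss (Suc h)) (ss h) a) \<partial>mA))"
      by (subst PA.product_nn_integral_prod) (measurable, auto simp: ssh)
    also have "\<dots> = ennreal (rho (ss 0)) * (\<Prod>h<H. g (ss h) (ss (Suc h)))"
      by (simp add: g_def)
    finally show "(\<integral>\<^sup>+ as. ennreal (traj_dens rho (\<lambda>_. q) P H () (ss, as)) \<partial>PiM {..<H} (\<lambda>_. mA))
      = ennreal (rho (ss 0)) * (\<Prod>h<H. g (ss h) (ss (Suc h)))" .
  qed
  also have "\<dots> = 1" by (rule chain)
  finally show ?thesis .
qed



lemma (in prob_space) sq_expand: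
  fixes X :: "'a \<Rightarrow> real" and c :: real
  assumes X: "integrable M X" and X2: "integrable M (\<lambda>x. (X x)\<^sup>2)"
  shows "(\<integral>x. (X x - c)\<^sup>2 \<partial>M) = (\<integral>x. (X x)\<^sup>2 \<partial>M) - 2 * c * (\<integral>x. X x \<partial>M) + c\<^sup>2"
proof -
  have "(\<integral>x. (X x - c)\<^sup>2 \<partial>M) = (\<integral>x. ((X x)\<^sup>2 - 2 * c * X x) + c\<^sup>2 \<partial>M)"
    by (rule Bochner_Integration.integral_cong) (auto simp: power2_diff)
  also have "\<dots> = (\<integral>x. (X x)\<^sup>2 - 2 * c * X x \<partial>M) + c\<^sup>2"
    using X X2 by (subst Bochner_Integration.integral_add) (auto simp: prob_space)
  also have "(\<integral>x. (X x)\<^sup>2 - 2 * c * X x \<partial>M) = (\<integral>x. (X x)\<^sup>2 \<partial>M) - 2 * c * (\<integral>x. X x \<partial>M)"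
    using X X2 by (subst Bochner_Integration.integral_diff) auto
  finally show ?thesis .
qed

lemma (in prob_space) var_le_sq:
  fixes X :: "'a \<Rightarrow> real" and c :: real
  assumes X: "integrable M X" and X2: "integrable M (\<lambda>x. (X x)\<^sup>2)"
  shows "(\<integral>x. (X x - (\<integral>y. X y \<partial>M))\<^sup>2 \<partial>M) \<le> (\<integral>x. (X x - c)\<^sup>2 \<partial>M)"
    and "(\<integral>x. (X x - (\<integral>y. X y \<partial>M))\<^sup>2 \<partial>M) = (\<integral>x. (X x)\<^sup>2 \<partial>M) - (\<integral>y. X y \<partial>M)\<^sup>2"
proof -
  let ?E = "\<integral>y. X y \<partial>M"
  have "0 \<le> (?E - c)\<^sup>2" by simp
  thus "(\<integral>x. (X x - ?E)\<^sup>2 \<partial>M) \<le> (\<integral>x. (X x - c)\<^sup>2 \<partial>M)"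
    unfolding sq_expand[OF X X2] by (simp add: power2_diff power2_eq_square algebra_simps)
  show "(\<integral>x. (X x - ?E)\<^sup>2 \<partial>M) = (\<integral>x. (X x)\<^sup>2 \<partial>M) - ?E\<^sup>2"
    unfolding sq_expand[OF X X2] by (simp add: power2_eq_square)
qed




theorem lemma1:
  fixes mS :: "'s measure" and mA :: "'a measure"
    and rho :: "'s \<Rightarrow> real"
    and pol :: "real^'d \<Rightarrow> 'a \<Rightarrow> 's \<Rightarrow> real"
    and P :: "'s \<Rightarrow> 's \<Rightarrow> 'a \<Rightarrow> real"
    and H :: nat
    and lgrad :: "real^'d \<Rightarrow> 'a \<Rightarrow> 's \<Rightarrow> real^'d"
    and lhess :: "real^'d \<Rightarrow> 'a \<Rightarrow> 's \<Rightarrow> real^'d \<Rightarrow> real^'d"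
    and G M W :: real
    and th_ref th_t :: "real^'d"
  assumes sfS: "sigma_finite_measure mS" and sfA: "sigma_finite_measure mA"
    and rho_meas: "rho \<in> borel_measurable mS"
    and rho_nonneg: "\<And>s. s \<in> space mS \<Longrightarrow> rho s \<ge> 0"
    and rho_prob: "(\<integral>\<^sup>+ s. ennreal (rho s) \<partial>mS) = 1"
    and pol_meas: "\<And>th. (\<lambda>(a, s). pol th a s) \<in> borel_measurable (mA \<Otimes>\<^sub>M mS)"
    and pol_pos: "\<And>th a s. pol th a s > 0"
    and pol_prob: "\<And>th s. s \<in> space mS \<Longrightarrow> (\<integral>\<^sup>+ a. ennreal (pol th a s) \<partial>mA) = 1"
    and P_meas: "(\<lambda>(s', s, a). P s' s a) \<in> borel_measurable (mS \<Otimes>\<^sub>M (mS \<Otimes>\<^sub>M mA))"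
    and P_nonneg: "\<And>s' s a. s' \<in> space mS \<Longrightarrow> s \<in> space mS \<Longrightarrow> a \<in> space mA \<Longrightarrow> P s' s a \<ge> 0"
    and P_prob: "\<And>s a. s \<in> space mS \<Longrightarrow> a \<in> space mA \<Longrightarrow> (\<integral>\<^sup>+ s'. ennreal (P s' s a) \<partial>mS) = 1"
    and A1_grad: "\<And>th a s. GDERIV (\<lambda>th'. ln (pol th' a s)) th :> lgrad th a s"
    and A1_hess: "\<And>th a s. ((\<lambda>th'. lgrad th' a s) has_derivative lhess th a s) (at th)"
    and G_pos: "G > 0" and M_pos: "M > 0"
    and A1_G: "\<And>th a s. norm (lgrad th a s) \<le> G"
    and A1_M: "\<And>th a s. onorm (lhess th a s) \<le> M"
    and A3: "\<And>th1 th2. integrable (traj_dist mS mA rho pol P H th2)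
                 (\<lambda>\<tau>. (imp_weight rho pol P H th1 th2 \<tau>)\<^sup>2)
             \<and> var_of (traj_dist mS mA rho pol P H th2) (imp_weight rho pol P H th1 th2) \<le> W"
  shows "var_of (traj_dist mS mA rho pol P H th_t) (imp_weight rho pol P H th_ref th_t)
           \<le> real H * (2 * real H * G\<^sup>2 + M) * (W + 1) * (norm (th_ref - th_t))\<^sup>2"
proof -
  let ?B = "traj_base mS mA H"
  define p where "p t = traj_dens rho pol P H t" for t
  define D where "D = traj_dist mS mA rho pol P H th_t"
  define w where "w = imp_weight rho pol P H th_ref th_t"
  define \<Delta> where "\<Delta> = norm (th_ref - th_t)"
  define K where "K = (real H * G * \<Delta>)\<^sup>2"
  define X where "X \<tau> = (\<Sum>h<H. ln (pol th_ref (snd \<tau> h) (fst \<tau> h)) - ln (pol th_t (snd \<tau> h) (fst \<tau> h)))" for \<tau> :: "(nat \<Rightarrow> 's) \<times> (nat \<Rightarrow> 'a)"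
  have pmeas[measurable]: "p t \<in> borel_measurable ?B" for t
    unfolding p_def by (rule traj_dens_meas[OF rho_meas pol_meas P_meas])
  have mass: "(\<integral>\<^sup>+\<tau>. ennreal (p t \<tau>) \<partial>?B) = 1" for t
  proof -
    have "p t = traj_dens rho (\<lambda>_. pol t) P H ()" by (simp add: p_def traj_dens_def)
    thus ?thesis using traj_mass[OF sfS sfA rho_meas rho_nonneg rho_prob pol_meas less_imp_le[OF pol_pos] pol_prob P_meas P_nonneg P_prob]
      by simp
  qed
  have D_eq: "D = density ?B (\<lambda>\<tau>. ennreal (p th_t \<tau>))" by (simp add: D_def traj_dist_def p_def)
  have sets_D: "sets D = sets ?B" and space_D: "space D = space ?B" by (simp_all add: D_eq)
  have probD: "prob_space D"
  proof (rule prob_spaceI)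
    have "emeasure D (space D) = (\<integral>\<^sup>+\<tau>. ennreal (p th_t \<tau>) * indicator (space ?B) \<tau> \<partial>?B)"
      unfolding D_eq by (subst emeasure_density[OF measurable_compose[OF pmeas measurable_ennreal]]) simp_all
    also have "\<dots> = (\<integral>\<^sup>+\<tau>. ennreal (p th_t \<tau>) \<partial>?B)"
      by (rule nn_integral_cong) simp
    finally show "emeasure D (space D) = 1" using mass by simp
  qed
  interpret prob_space D by (rule probD)
  have w_eq: "w = (\<lambda>\<tau>. p th_ref \<tau> / p th_t \<tau>)" by (simp add: w_def imp_weight_def p_def fun_eq_iff)
  have wmeasB: "w \<in> borel_measurable ?B" unfolding w_eq by measurable
  have wmeas: "w \<in> borel_measurable D" using wmeasB measurable_cong_sets[OF sets_D refl] by blast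
  have Xb: "\<bar>X \<tau>\<bar> \<le> real H * G * \<Delta>" for \<tau>
  proof -
    have "\<bar>X \<tau>\<bar> \<le> (\<Sum>h<H. \<bar>ln (pol th_ref (snd \<tau> h) (fst \<tau> h)) - ln (pol th_t (snd \<tau> h) (fst \<tau> h))\<bar>)"
      unfolding X_def by (rule sum_abs)
    also have "\<dots> \<le> (\<Sum>h<H. G * \<Delta>)"
      by (rule sum_mono) (unfold \<Delta>_def, rule ln_diff_bound[OF A1_grad A1_G])
    finally show ?thesis by simp
  qed
  have pw: "w \<tau> = exp (X \<tau>)" if pos: "p th_t \<tau> > 0" for \<tau>
  proof -
    obtain ss as where tau: "\<tau> = (ss, as)" by (cases \<tau>)
    have r: "exp (X \<tau>) = (\<Prod>h<H. pol th_ref (as h) (ss h) / pol th_t (as h) (ss h))"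
      unfolding X_def tau by (simp add: exp_sum exp_diff pol_pos)
    have "p th_ref \<tau> = exp (X \<tau>) * p th_t \<tau>"
    proof -
      have "(\<Prod>h<H. pol th_ref (as h) (ss h) * P (ss (Suc h)) (ss h) (as h))
          = (\<Prod>h<H. (pol th_ref (as h) (ss h) / pol th_t (as h) (ss h)) * (pol th_t (as h) (ss h) * P (ss (Suc h)) (ss h) (as h)))"
        by (rule prod.cong) (auto simp: pol_pos less_imp_neq[symmetric] field_simps)
      also have "\<dots> = (\<Prod>h<H. pol th_ref (as h) (ss h) / pol th_t (as h) (ss h)) * (\<Prod>h<H. pol th_t (as h) (ss h) * P (ss (Suc h)) (ss h) (as h))"
        by (rule prod.distrib)
      finally show ?thesis unfolding r by (simp add: p_def traj_dens_def tau)
    qed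
    thus ?thesis unfolding w_eq using pos by simp
  qed
  have AEpos: "AE \<tau> in D. p th_t \<tau> > 0"
    unfolding D_eq by (subst AE_density[OF measurable_compose[OF pmeas measurable_ennreal]]) simp
  have AEw: "AE \<tau> in D. w \<tau> = exp (X \<tau>)" using AEpos by eventually_elim (rule pw)
  have AEbound: "AE \<tau> in D. norm (w \<tau>) \<le> exp (real H * G * \<Delta>)"
    using AEw
  proof eventually_elim
    case (elim \<tau>)
    have "X \<tau> \<le> real H * G * \<Delta>" using Xb[of \<tau>] by linarith
    thus ?case using elim by simp
  qed
  have w_int: "integrable D w" by (rule integrable_const_bound[OF AEbound wmeas])
  have w2_int: "integrable D (\<lambda>\<tau>. (w \<tau>)\<^sup>2)" and varW: "var_of D w \<le> W"
    using A3[of th_t th_ref] by (simp_all add: D_def w_def)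
  define E where "E = (\<integral>\<tau>. w \<tau> \<partial>D)"
  have AEwnn: "AE \<tau> in D. 0 \<le> w \<tau>" using AEw by eventually_elim simp
  have E_nn: "0 \<le> E" unfolding E_def by (rule integral_nonneg_AE[OF AEwnn])
  have E_le: "E \<le> 1"
  proof -
    have "(\<integral>\<^sup>+\<tau>. ennreal (w \<tau>) \<partial>D) = (\<integral>\<^sup>+\<tau>. ennreal (p th_t \<tau>) * ennreal (w \<tau>) \<partial>?B)"
      unfolding D_eq
      by (rule nn_integral_density, rule measurable_compose[OF pmeas measurable_ennreal],
          rule measurable_compose[OF wmeasB measurable_ennreal])
    also have "\<dots> \<le> (\<integral>\<^sup>+\<tau>. ennreal (p th_ref \<tau>) \<partial>?B)"
    proof (rule nn_integral_mono)
      fix \<tau>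
      show "ennreal (p th_t \<tau>) * ennreal (w \<tau>) \<le> ennreal (p th_ref \<tau>)"
      proof (cases "p th_t \<tau> > 0")
        case True
        have "p th_t \<tau> * w \<tau> = p th_ref \<tau>" using True unfolding w_eq by simp
        thus ?thesis using True by (simp add: ennreal_mult'[symmetric])
      next
        case False
        hence "ennreal (p th_t \<tau>) = 0" by (intro ennreal_neg) simp
        thus ?thesis by simp
      qed
    qed
    also have "\<dots> = 1" by (rule mass)
    finally have le1: "(\<integral>\<^sup>+\<tau>. ennreal (w \<tau>) \<partial>D) \<le> 1" .
    have "E = enn2real (\<integral>\<^sup>+\<tau>. ennreal (w \<tau>) \<partial>D)"
      unfolding E_def by (rule integral_eq_nn_integral[OF wmeas AEwnn])
    also have "\<dots> \<le> enn2real 1" by (rule enn2real_mono[OF le1]) simp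
    finally show ?thesis by simp
  qed
  have var_eq: "var_of D w = (\<integral>\<tau>. (w \<tau>)\<^sup>2 \<partial>D) - E\<^sup>2"
    unfolding var_of_def E_def by (rule var_le_sq(2)[OF w_int w2_int])
  have "0 \<le> var_of D w" unfolding var_of_def by (rule integral_nonneg_AE) simp
  hence W_nn: "0 \<le> W" using varW by linarith
  have E2: "E\<^sup>2 \<le> 1" using E_nn E_le by (simp add: power_le_one)
  have w2_le: "(\<integral>\<tau>. (w \<tau>)\<^sup>2 \<partial>D) \<le> W + 1" using var_eq varW E2 by linarith
  have sq_int: "integrable D (\<lambda>\<tau>. (w \<tau> - 1)\<^sup>2)"
  proof -
    have "integrable D (\<lambda>\<tau>. (w \<tau>)\<^sup>2 + 1 - 2 * w \<tau>)"
      by (intro Bochner_Integration.integrable_add Bochner_Integration.integrable_diff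
          integrable_mult_right w_int w2_int integrable_const)
    thus ?thesis by (simp add: power2_diff)
  qed
  have "var_of D w \<le> (\<integral>\<tau>. (w \<tau> - 1)\<^sup>2 \<partial>D)"
    unfolding var_of_def by (rule var_le_sq(1)[OF w_int w2_int])
  also have "\<dots> \<le> (\<integral>\<tau>. K * ((w \<tau>)\<^sup>2 + 1) \<partial>D)"
  proof (rule integral_mono_AE[OF sq_int])
    show "integrable D (\<lambda>\<tau>. K * ((w \<tau>)\<^sup>2 + 1))"
      by (intro Bochner_Integration.integrable_add integrable_mult_right w2_int integrable_const)
    show "AE \<tau> in D. (w \<tau> - 1)\<^sup>2 \<le> K * ((w \<tau>)\<^sup>2 + 1)"
      using AEw
    proof eventually_elim
      case (elim \<tau>)
      have "\<bar>X \<tau>\<bar>\<^sup>2 \<le> (real H * G * \<Delta>)\<^sup>2"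
        by (rule power_mono[OF Xb abs_ge_zero])
      hence "(X \<tau>)\<^sup>2 \<le> K" unfolding K_def by simp
      hence "(X \<tau>)\<^sup>2 * ((w \<tau>)\<^sup>2 + 1) \<le> K * ((w \<tau>)\<^sup>2 + 1)"
        by (rule mult_right_mono) simp
      moreover have "(w \<tau> - 1)\<^sup>2 \<le> (X \<tau>)\<^sup>2 * ((w \<tau>)\<^sup>2 + 1)"
        using exp_sq_bound[of "X \<tau>"] elim by simp
      ultimately show ?case by linarith
    qed
  qed
  also have "\<dots> = K * ((\<integral>\<tau>. (w \<tau>)\<^sup>2 \<partial>D) + 1)"
    using w2_int by (simp add: prob_space)
  also have "\<dots> \<le> K * (W + 2)"
    using w2_le by (intro mult_left_mono) (auto simp: K_def)
  also have "\<dots> \<le> real H * (2 * real H * G\<^sup>2 + M) * (W + 1) * \<Delta>\<^sup>2"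
  proof -
    have a: "K * (W + 2) \<le> (real H * G * \<Delta>)\<^sup>2 * (2 * (W + 1))"
      unfolding K_def using W_nn by (intro mult_left_mono) auto
    have b: "0 \<le> real H * M * (W + 1) * \<Delta>\<^sup>2" using W_nn M_pos by simp
    have "real H * (2 * real H * G\<^sup>2 + M) * (W + 1) * \<Delta>\<^sup>2
        = (real H * G * \<Delta>)\<^sup>2 * (2 * (W + 1)) + real H * M * (W + 1) * \<Delta>\<^sup>2"
      by (simp add: power2_eq_square algebra_simps)
    thus ?thesis using a b by linarith
  qed
  finally show ?thesis by (simp add: D_def w_def \<Delta>_def)
qed


end
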